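(* Let $\{a(n)\}_{n\in\mathbb{N}}$ be a sequence of non-negative numbers with $\sum_{n=1}^{\infty}a(n)\le 1$. Then for every $\alpha>1$ there exist $\varepsilon(\alpha)>0$ and $\nu(\alpha)\in\mathbb{N}$ such that for every integer $N\ge\nu(\alpha)$ there is a positive integer $\ell=\ell_{\alpha,N}<N^{\alpha}$ such that, with $B_{\alpha,N}:=\{\ell,2\ell,\ldots,N\ell\}$, one has $\sum_{\lambda,\mu\in B_{\alpha,N},\ \mu<\lambda}a(\lambda-\mu)<\frac{1}{N^{\varepsilon(\alpha)}}$. *)

theory Defs
  imports "HOL-Analysis.Analysis"
begin

end

theory Submission imports Defs "HOL-Computational_Algebra.Primes" begin
lemma divisor_bound:
  fixes \<delta>::real and K::nat
  assumes dpos: "\<delta> > 0" and big: "\<And>p. prime p \<Longrightarrow> p > K \<Longrightarrow> 2 \<le> real p powr \<delta>"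
  shows "m > 0 \<Longrightarrow> real (card {d. d dvd m \<and> coprime d (fact K)}) \<le> real m powr \<delta>"
proof (induction m rule: less_induct)
  case (less m)
  let ?T = "\<lambda>n. {d. d dvd n \<and> coprime d (fact K :: nat)}"
  show ?case
  proof (cases "\<exists>p. prime p \<and> p dvd m \<and> p > K")
    case True
    then obtain p where p: "prime p" "p dvd m" "p > K" by blast
    define r where "r = m div p"
    have m: "m = p * r" using p r_def by simp
    have p1: "p > 1" using prime_gt_1_nat[OF p(1)] .
    have r0: "r > 0" using less.prems m by (cases r) auto
    have rlt: "r < m" using m p1 r0 by simp
    have sub: "?T m \<subseteq> ?T r \<union> (\<lambda>d. p*d) ` ?T r"
    proof
      fix d assume d: "d \<in> ?T m"
      show "d \<in> ?T r \<union> (\<lambda>d. p*d) ` ?T r"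
      proof (cases "p dvd d")
        case True then obtain e where e: "d = p*e" by (auto elim: dvdE)
        have "e dvd r" using d e m p1 by (auto simp: nat_mult_dvd_cancel_disj)
        moreover have "coprime e (fact K)" using d e by simp
        ultimately show ?thesis using e by blast
      next
        case False
        then have "coprime p d" using p(1) by (simp add: prime_imp_coprime)
        then have "d dvd r" using d m by (metis coprime_commute coprime_dvd_mult_right_iff mem_Collect_eq)
        then show ?thesis using d by blast
      qed
    qed
    have fin: "finite (?T r)"
      by (rule finite_subset[of _ "{d. d dvd r}"]) (auto simp: finite_divisors_nat r0)
    have "card (?T m) \<le> card (?T r \<union> (\<lambda>d. p*d) ` ?T r)"
      using sub fin by (intro card_mono) auto
    also have "\<dots> \<le> card (?T r) + card ((\<lambda>d. p*d) ` ?T r)" by (rule card_Un_le)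
    also have "\<dots> \<le> 2 * card (?T r)" using card_image_le[OF fin, of "\<lambda>d. p*d"] by simp
    finally have "real (card (?T m)) \<le> 2 * real (card (?T r))" by linarith
    also have "\<dots> \<le> 2 * real r powr \<delta>" using less.IH[OF rlt r0] by simp
    also have "\<dots> \<le> real p powr \<delta> * real r powr \<delta>" using big[OF p(1) p(3)] by (intro mult_right_mono) auto
    also have "\<dots> = real m powr \<delta>" using m by (simp add: powr_mult)
    finally show ?thesis .
  next
    case False
    have "?T m \<subseteq> {1}"
    proof
      fix d assume d: "d \<in> ?T m"
      show "d \<in> {1}"
      proof (rule ccontr)
        assume "d \<notin> {1}"
        then obtain q where q: "prime q" "q dvd d" using prime_factor_nat by auto
        have "q dvd m" using q d by auto
        then have "q \<le> K" using False q by auto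
        then have "q dvd fact K" using q using prime_gt_0_nat[OF q(1)] by (intro dvd_fact) auto
        then have "is_unit q" using d q coprime_common_divisor by blast
        then show False using q by simp
      qed
    qed
    then have "card (?T m) \<le> 1" using card_mono[of "{1}" "?T m"] by simp
    moreover have "1 \<le> real m powr \<delta>" using less.prems dpos by (intro ge_one_powr_ge_zero) auto
    ultimately show ?thesis by linarith
  qed
qed
lemma pair_bound:
  fixes a :: "nat \<Rightarrow> real" and l N :: nat
  assumes nonneg: "\<And>n. n \<ge> 1 \<Longrightarrow> a n \<ge> 0" and l: "l > 0"
  shows "(\<Sum>(lam, \<mu>) \<in> {(x, y). x \<in> (\<lambda>k. k * l) ` {1..N} \<and> y \<in> (\<lambda>k. k * l) ` {1..N} \<and> y < x}.
            a (lam - \<mu>)) \<le> real N * (\<Sum>k\<in>{1..<N}. a (k*l))"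
proof -
  let ?S = "{(x, y). x \<in> (\<lambda>k. k * l) ` {1..N} \<and> y \<in> (\<lambda>k. k * l) ` {1..N} \<and> y < x}"
  define g where "g = (\<lambda>(x::nat,y::nat). (y div l, (x - y) div l))"
  have inj: "inj_on g ?S"
  proof (rule inj_onI)
    fix u v assume u: "u \<in> ?S" and v: "v \<in> ?S" and e: "g u = g v"
    from u obtain i j where uij: "u = (i*l, j*l)" "j < i" using l by auto
    from v obtain i' j' where vij: "v = (i'*l, j'*l)" "j' < i'" using l by auto
    have "j = j'" "i - j = i' - j'" using e uij vij l
      by (auto simp: g_def diff_mult_distrib[symmetric])
    then have "i = i'" using uij vij by linarith
    then show "u = v" using uij vij \<open>j = j'\<close> by simp
  qed
  have img: "g ` ?S \<subseteq> {1..N} \<times> {1..<N}"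
  proof
    fix y assume "y \<in> g ` ?S"
    then obtain i j where "y = g (i*l, j*l)" "j < i" "i \<in> {1..N}" "j \<in> {1..N}" using l by auto
    then show "y \<in> {1..N} \<times> {1..<N}" using l by (auto simp: g_def diff_mult_distrib[symmetric])
  qed
  have "(\<Sum>(lam, \<mu>) \<in> ?S. a (lam - \<mu>)) = (\<Sum>x \<in> ?S. (\<lambda>(j,k). a (k*l)) (g x))"
  proof (rule sum.cong[OF refl])
    fix x assume "x \<in> ?S"
    then obtain i j where "x = (i*l, j*l)" "j < i" using l by auto
    then show "(case x of (lam, \<mu>) \<Rightarrow> a (lam - \<mu>)) = (\<lambda>(j,k). a (k*l)) (g x)"
      using l by (auto simp: g_def diff_mult_distrib[symmetric])
  qed
  also have "\<dots> = (\<Sum>y \<in> g ` ?S. (\<lambda>(j,k). a (k*l)) y)"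
    using sum.reindex[OF inj, of "\<lambda>(j,k). a (k*l)"] by (simp add: comp_def)
  also have "\<dots> \<le> (\<Sum>y \<in> {1..N} \<times> {1..<N}. (\<lambda>(j,k). a (k*l)) y)"
    by (rule sum_mono2[OF _ img]) (use nonneg l in auto)
  also have "\<dots> = real N * (\<Sum>k\<in>{1..<N}. a (k*l))"
    by (simp add: sum.cartesian_product[symmetric])
  finally show ?thesis .
qed
lemma avg_bound:
  fixes a :: "nat \<Rightarrow> real" and N R K :: nat and C :: real
  assumes nonneg: "\<And>n. n \<ge> 1 \<Longrightarrow> a n \<ge> 0"
    and sum_le: "\<And>M. (\<Sum>n=1..M. a n) \<le> 1"
    and Cb: "\<And>j k. j < R \<Longrightarrow> k \<in> {1..<N} \<Longrightarrow>
       real (card {d. d dvd (k * (1 + fact K * j)) \<and> coprime d (fact K)}) \<le> C"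
    and C0: "C \<ge> 0"
  shows "(\<Sum>j<R. \<Sum>k\<in>{1..<N}. a (k * (1 + fact K * j))) \<le> C"
proof -
  define P :: nat where "P = fact K"
  have P0: "P > 0" by (simp add: P_def)
  let ?S = "{..<R} \<times> {1..<N}"
  define f where "f = (\<lambda>(j,k). k * (1 + P * j))"
  let ?T = "\<lambda>n. {d. d dvd n \<and> coprime d (fact K :: nat)}"
  have finS: "finite ?S" by simp
  have "(\<Sum>j<R. \<Sum>k\<in>{1..<N}. a (k * (1 + fact K * j))) = (\<Sum>x\<in>?S. a (f x))"
    by (simp add: sum.cartesian_product f_def P_def case_prod_unfold)
  also have "\<dots> = (\<Sum>m \<in> f ` ?S. (\<Sum>x\<in>{x\<in>?S. f x = m}. a (f x)))"
    by (rule sum.image_gen[OF finS])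
  also have "\<dots> \<le> (\<Sum>m \<in> f ` ?S. C * a m)"
  proof (rule sum_mono)
    fix m assume m: "m \<in> f ` ?S"
    then obtain j0 k0 where jk0: "j0 < R" "k0 \<in> {1..<N}" "m = f (j0,k0)" by auto
    have m1: "m \<ge> 1" using jk0 by (auto simp: f_def)
    have "(\<Sum>x\<in>{x\<in>?S. f x = m}. a (f x)) = (\<Sum>x\<in>{x\<in>?S. f x = m}. a m)" by simp
    also have "\<dots> = real (card {x\<in>?S. f x = m}) * a m" by simp
    also have "\<dots> \<le> C * a m"
    proof (rule mult_right_mono)
      have inj: "inj_on (\<lambda>x. 1 + P * fst x) {x\<in>?S. f x = m}"
      proof (rule inj_onI)
        fix x y assume x: "x \<in> {x\<in>?S. f x = m}" and y: "y \<in> {x\<in>?S. f x = m}"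
          and e: "1 + P * fst x = 1 + P * fst y"
        have "fst x = fst y" using e P0 by simp
        moreover have "snd x = snd y"
        proof -
          obtain j k where "x = (j,k)" by force
          obtain j' k' where "y = (j',k')" by force
          have e1: "k * (1 + P * j) = m" "k' * (1 + P * j') = m"
            using x y \<open>x = (j,k)\<close> \<open>y = (j',k')\<close> by (auto simp: f_def)
          have "j = j'" using \<open>x = (j,k)\<close> \<open>y = (j',k')\<close> \<open>fst x = fst y\<close> by simp
          then have "k * (1 + P * j) = k' * (1 + P * j)" using e1 by simp
          then have "k = k'" using mult_right_cancel[of "1 + P * j" k k'] by simp
          then show ?thesis using \<open>x = (j,k)\<close> \<open>y = (j',k')\<close> by simp
        qed
        ultimately show "x = y" by (simp add: prod_eq_iff)
      qed
      have sub: "(\<lambda>x. 1 + P * fst x) ` {x\<in>?S. f x = m} \<subseteq> ?T m"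
      proof
        fix d assume "d \<in> (\<lambda>x. 1 + P * fst x) ` {x\<in>?S. f x = m}"
        then obtain x where x: "x \<in> {x\<in>?S. f x = m}" "d = 1 + P * fst x" by blast
        obtain j k where xjk: "x = (j,k)" by force
        have jk: "d = 1 + P * j" "f (j,k) = m" using x xjk by auto
        have "m = k * (1 + P * j)" using jk(2) by (simp add: f_def)
        then have "d dvd m" using jk(1) by (metis dvd_triv_right)
        moreover have "coprime d P" unfolding jk(1)
        proof -
          have "gcd P (j * P + 1) = 1" by (simp only: gcd_add_mult) simp
          then show "coprime (1 + P * j) P"
            by (simp add: coprime_iff_gcd_eq_1 gcd.commute add.commute mult.commute)
        qed
        ultimately show "d \<in> ?T m" by (simp add: P_def)
      qed
      have finT: "finite (?T m)"
        by (rule finite_subset[of _ "{d. d dvd m}"]) (use m1 finite_divisors_nat in auto)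
      have "card {x\<in>?S. f x = m} \<le> card (?T m)"
        using card_inj_on_le[OF inj sub finT] .
      also have "real (card (?T m)) \<le> C" using Cb[OF jk0(1,2)] jk0(3) by (simp add: f_def P_def)
      finally show "real (card {x\<in>?S. f x = m}) \<le> C" by simp
      show "a m \<ge> 0" using nonneg m1 by simp
    qed
    finally show "(\<Sum>x\<in>{x\<in>?S. f x = m}. a (f x)) \<le> C * a m" .
  qed
  also have "\<dots> = C * (\<Sum>m \<in> f ` ?S. a m)" by (simp add: sum_distrib_left)
  also have "\<dots> \<le> C * (\<Sum>m = 1..N * (1 + P * R). a m)"
  proof (rule mult_left_mono[OF _ C0], rule sum_mono2)
    show "f ` ?S \<subseteq> {1..N * (1 + P * R)}"
    proof
      fix m assume "m \<in> f ` ?S"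
      then obtain j k where "j < R" "k \<in> {1..<N}" "m = k * (1 + P * j)" by (auto simp: f_def)
      moreover have "k * (1 + P * j) \<le> N * (1 + P * R)"
        using calculation by (intro mult_mono) auto
      ultimately show "m \<in> {1..N * (1 + P * R)}" by auto
    qed
  qed (use nonneg in auto)
  also have "\<dots> \<le> C * 1" using sum_le C0 by (intro mult_left_mono) auto
  finally show ?thesis by simp
qed
lemma final_ineq:
  fixes N X P G C R A :: real
  assumes N: "N > 0" and X: "X > 0" and A: "A = N * X * X * X" and C: "C = X"
    and R: "R \<ge> A / (2*P)" and P: "P > 0" and Rpos: "R > 0"
    and G: "G \<le> C / R" and XP: "2*P < X" and F: "F \<le> N * G"
  shows "F < 1 / X"
proof -
  have "F \<le> N * (C / R)" using F G N by (meson mult_left_mono less_imp_le order_trans)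
  also have "\<dots> \<le> N * (C / (A / (2*P)))"
    using R N C X P A Rpos by (intro mult_left_mono divide_left_mono) (auto intro!: mult_pos_pos)
  also have "\<dots> = 2*P / (X*X)" using A C N X P by (simp add: field_simps)
  also have "\<dots> < X / (X*X)" using XP X by (intro divide_strict_right_mono) auto
  also have "\<dots> = 1 / X" using X by simp
  finally show ?thesis .
qed

lemma big_prime:
  fixes \<delta> :: real and K :: nat
  assumes d: "\<delta> > 0" and K: "real K \<ge> 2 powr (1/\<delta>)" and p: "p > K"
  shows "2 \<le> real p powr \<delta>"
proof -
  have "2 = (2 powr (1/\<delta>)) powr \<delta>" using d by (simp add: powr_powr)
  also have "\<dots> \<le> real p powr \<delta>" using K p d by (intro powr_mono2) auto
  finally show ?thesis .
qed
theorem corollary10: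
  fixes a :: "nat \<Rightarrow> real"
  assumes nonneg: "\<And>n. n \<ge> 1 \<Longrightarrow> a n \<ge> 0"
    and sum_le: "\<And>M. (\<Sum>n=1..M. a n) \<le> 1"
  shows "\<forall>\<alpha>::real. \<alpha> > 1 \<longrightarrow>
    (\<exists>\<epsilon>::real. \<epsilon> > 0 \<and> (\<exists>\<nu>::nat. \<forall>N::nat. N \<ge> \<nu> \<longrightarrow>
      (\<exists>l::nat. l > 0 \<and> real l < real N powr \<alpha> \<and>
        (\<Sum>(lam, \<mu>) \<in> {(x, y). x \<in> (\<lambda>k. k * l) ` {1..N} \<and> y \<in> (\<lambda>k. k * l) ` {1..N} \<and> y < x}.
            a (lam - \<mu>)) < 1 / real N powr \<epsilon>)))"
proof (intro allI impI)
  fix \<alpha> :: real assume \<alpha>: "\<alpha> > 1"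
  define \<epsilon> where "\<epsilon> = (\<alpha> - 1) / 3"
  define \<delta> where "\<delta> = \<epsilon> / (1 + \<alpha>)"
  have e0: "\<epsilon> > 0" using \<alpha> by (simp add: \<epsilon>_def)
  have d0: "\<delta> > 0" using e0 \<alpha> by (simp add: \<delta>_def)
  define K :: nat where "K = nat \<lceil>2 powr (1/\<delta>)\<rceil>"
  have K: "real K \<ge> 2 powr (1/\<delta>)" unfolding K_def by linarith
  define P :: nat where "P = fact K"
  have P0: "P > 0" by (simp add: P_def)
  define \<nu> :: nat where "\<nu> = nat \<lceil>(2*P+1) powr (1/\<epsilon>)\<rceil> + 2*P + 2"
  have "\<forall>N::nat. N \<ge> \<nu> \<longrightarrow>
      (\<exists>l::nat. l > 0 \<and> real l < real N powr \<alpha> \<and>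
        (\<Sum>(lam, \<mu>) \<in> {(x, y). x \<in> (\<lambda>k. k * l) ` {1..N} \<and> y \<in> (\<lambda>k. k * l) ` {1..N} \<and> y < x}.
            a (lam - \<mu>)) < 1 / real N powr \<epsilon>)"
  proof (intro allI impI)
    fix N :: nat assume N: "N \<ge> \<nu>"
    have N2: "real N \<ge> 2*P+2" using N unfolding \<nu>_def by linarith
    have N1: "real N \<ge> (2*P+1) powr (1/\<epsilon>)" using N unfolding \<nu>_def by linarith
    have Npos: "real N > 0" using N2 by linarith
    define X where "X = real N powr \<epsilon>"
    have X0: "X > 0" using Npos by (simp add: X_def)
    have XP: "2*real P < X"
    proof -
      have "real (2*P+1) = ((2*P+1) powr (1/\<epsilon>)) powr \<epsilon>" using e0 by (simp add: powr_powr)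
      also have "\<dots> \<le> X" unfolding X_def using N1 e0 by (intro powr_mono2) auto
      finally show ?thesis by simp
    qed
    define A where "A = real N powr \<alpha>"
    have AX: "A = real N * X * X * X"
    proof -
      have "\<alpha> = 1 + \<epsilon> + \<epsilon> + \<epsilon>" by (simp add: \<epsilon>_def field_simps)
      then have "A = real N powr (1 + \<epsilon> + \<epsilon> + \<epsilon>)" by (simp add: A_def)
      also have "\<dots> = real N powr 1 * X * X * X" unfolding powr_add X_def by simp
      finally show ?thesis using Npos by simp
    qed
    have AN: "A \<ge> real N"
    proof -
      have "real N powr 1 \<le> real N powr \<alpha>" using N2 \<alpha> by (intro powr_mono) auto
      then show ?thesis using Npos by (simp add: A_def)
    qed
    define R :: nat where "R = nat \<lfloor>(A - 1) / P\<rfloor>"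
    have Rge: "real R \<ge> (A - 1)/P - 1" unfolding R_def by linarith
    have Rle: "real R \<le> (A - 1)/P"
    proof -
      have "(A - 1)/P \<ge> 0" using AN N2 by simp
      then show ?thesis unfolding R_def by linarith
    qed
    have RA: "real R \<ge> A / (2 * real P)"
    proof -
      have "A / (2 * real P) \<le> (A - 1)/P - 1"
        using AN N2 P0 by (simp add: field_simps)
      then show ?thesis using Rge by linarith
    qed
    have "A / (2 * real P) > 0" using AN Npos P0 by simp
    then have Rpos: "real R > 0" using RA by linarith
    then have R0: "R > 0" by simp
    have lt: "real (1 + P * j) < A" if "j < R" for j
    proof -
      have "real P * (real j + 1) \<le> real P * real R" using that by (intro mult_left_mono) auto
      also have "\<dots> \<le> A - 1" using Rle P0 by (simp add: field_simps)
      finally show ?thesis using P0 by (simp add: algebra_simps)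
    qed
    define G where "G = (\<lambda>j. \<Sum>k\<in>{1..<N}. a (k * (1 + fact K * j)))"
    have Cb: "real (card {d. d dvd (k * (1 + fact K * j)) \<and> coprime d (fact K)}) \<le> X"
      if j: "j < R" and k: "k \<in> {1..<N}" for j k
    proof -
      have m0: "k * (1 + fact K * j) > 0" using k by simp
      have "real (card {d. d dvd (k * (1 + fact K * j)) \<and> coprime d (fact K)})
          \<le> real (k * (1 + fact K * j)) powr \<delta>"
        by (rule divisor_bound[OF d0 big_prime[OF d0 K] m0])
      also have "\<dots> \<le> (real N * A) powr \<delta>"
      proof (intro powr_mono2)
        have "real k \<le> real N" using k by simp
        moreover have "real (1 + fact K * j) \<le> A" using lt[OF j] by (simp add: P_def)
        ultimately show "real (k * (1 + fact K * j)) \<le> real N * A"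
          unfolding of_nat_mult by (intro mult_mono) auto
      qed (use d0 in auto)
      also have "\<dots> = X"
      proof -
        have "(real N * A) = real N powr (1 + \<alpha>)" using Npos by (simp add: A_def powr_add)
        then show ?thesis using Npos \<alpha> by (simp add: powr_powr X_def \<delta>_def)
      qed
      finally show ?thesis .
    qed
    have sumG: "(\<Sum>j<R. G j) \<le> X"
      unfolding G_def by (rule avg_bound[OF nonneg sum_le Cb]) (use X0 in auto)
    obtain j where j: "j < R" "G j \<le> X / real R"
    proof (rule ccontr)
      assume "\<not> thesis"
      then have h: "\<And>j. j < R \<Longrightarrow> G j > X / real R" using that by force
      have "(\<Sum>j<R. X / real R) < (\<Sum>j<R. G j)"
        using R0 h by (intro sum_strict_mono) auto
      then show False using sumG Rpos by simp
    qed
    define l where "l = 1 + P * j"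
    have l0: "l > 0" by (simp add: l_def)
    have lA: "real l < real N powr \<alpha>" using lt[OF j(1)] by (simp add: l_def A_def)
    have Fb: "(\<Sum>(lam, \<mu>) \<in> {(x, y). x \<in> (\<lambda>k. k * l) ` {1..N} \<and> y \<in> (\<lambda>k. k * l) ` {1..N} \<and> y < x}.
            a (lam - \<mu>)) \<le> real N * G j"
      using pair_bound[where N=N, OF nonneg l0] by (simp add: G_def l_def P_def)
    have "(\<Sum>(lam, \<mu>) \<in> {(x, y). x \<in> (\<lambda>k. k * l) ` {1..N} \<and> y \<in> (\<lambda>k. k * l) ` {1..N} \<and> y < x}.
            a (lam - \<mu>)) < 1 / X"
      by (rule final_ineq[OF Npos X0 AX refl RA _ Rpos j(2) XP Fb]) (use P0 in simp)
    then show "\<exists>l::nat. l > 0 \<and> real l < real N powr \<alpha> \<and>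
        (\<Sum>(lam, \<mu>) \<in> {(x, y). x \<in> (\<lambda>k. k * l) ` {1..N} \<and> y \<in> (\<lambda>k. k * l) ` {1..N} \<and> y < x}.
            a (lam - \<mu>)) < 1 / real N powr \<epsilon>"
      using l0 lA by (auto simp: X_def)
  qed
  then show "\<exists>\<epsilon>::real. \<epsilon> > 0 \<and> (\<exists>\<nu>::nat. \<forall>N::nat. N \<ge> \<nu> \<longrightarrow>
      (\<exists>l::nat. l > 0 \<and> real l < real N powr \<alpha> \<and>
        (\<Sum>(lam, \<mu>) \<in> {(x, y). x \<in> (\<lambda>k. k * l) ` {1..N} \<and> y \<in> (\<lambda>k. k * l) ` {1..N} \<and> y < x}.
            a (lam - \<mu>)) < 1 / real N powr \<epsilon>))"
    using e0 by blast
qed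

end
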